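(* Let $B\colon\mathbf{Set}\to\mathbf{Set}$ be a functor, $\Lambda$ a finite set, and $(\tau_\lambda\colon B[0,1]\to[0,1])_{\lambda\in\Lambda}$ functions such that, for every set $Y$, whenever $k_i\colon Y\to[0,1]$ converges uniformly to $l$, $\tau_\lambda\circ Bk_i$ converges uniformly to $\tau_\lambda\circ Bl$ for each $\lambda$. Let $x\colon X\to BX$ be a coalgebra. Then for each $i\in\mathbb{N}$, the set $S_i=\{[\![\varphi]\!]_x\mid\mathrm{depth}(\varphi)\le i\}\subseteq\mathbf{Set}(X,[0,1])$ is approximating, i.e. for every nonexpansive $h\colon(X,d_{S_i})\to([0,1],d_e)$, every $\lambda\in\Lambda$ and all $z,w\in BX$, $\sup_{k\in S_i,\lambda'\in\Lambda}|\tau_{\lambda'}(Bk(z))-\tau_{\lambda'}(Bk(w))|\ge|\tau_\lambda(Bh(z))-\tau_\lambda(Bh(w))|$, where $d_{S_i}(a,b)=\sup_{k\in S_i}|k(a)-k(b)|$.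
   Context: Formulas: $\varphi::=\top\mid\neg\varphi\mid\min(\varphi_1,\varphi_2)\mid(\ominus q)\varphi\ (q\in\mathbb{Q}\cap[0,1])\mid\heartsuit_\lambda\varphi$. Semantics in $[0,1]$: $[\![\top]\!]=1$, $[\![\neg\varphi]\!]=1-[\![\varphi]\!]$, $[\![\min(\varphi_1,\varphi_2)]\!]=\min$ pointwise, $[\![(\ominus q)\varphi]\!]=\max([\![\varphi]\!]-q,0)$, $[\![\heartsuit_\lambda\varphi]\!]_x=\tau_\lambda\circ B[\![\varphi]\!]_x\circ x$. Depth: $0$ for $\top$, unchanged by $\neg,(\ominus q)$, maximum for $\min$, plus one for $\heartsuit_\lambda$. $d_e$ is the Euclidean metric. *)

theory Defs
  imports "HOL-Analysis.Analysis"
begin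

datatype 'l form =
    FTop
  | FNeg "'l form"
  | FMin "'l form" "'l form"
  | FMinus rat "'l form"
  | FHeart 'l "'l form"

fun wf_form :: "'l set \<Rightarrow> 'l form \<Rightarrow> bool" where
  "wf_form L FTop = True"
| "wf_form L (FNeg \<phi>) = wf_form L \<phi>"
| "wf_form L (FMin \<phi> \<psi>) = (wf_form L \<phi> \<and> wf_form L \<psi>)"
| "wf_form L (FMinus q \<phi>) = (0 \<le> q \<and> q \<le> 1 \<and> wf_form L \<phi>)"
| "wf_form L (FHeart l \<phi>) = (l \<in> L \<and> wf_form L \<phi>)"

fun depth :: "'l form \<Rightarrow> nat" where
  "depth FTop = 0"
| "depth (FNeg \<phi>) = depth \<phi>"
| "depth (FMin \<phi> \<psi>) = max (depth \<phi>) (depth \<psi>)"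
| "depth (FMinus q \<phi>) = depth \<phi>"
| "depth (FHeart l \<phi>) = Suc (depth \<phi>)"

text \<open>The functor B is represented by its
  action Bmap on maps k : X \<Rightarrow> [0,1], giving Bk : BX \<Rightarrow> B[0,1]
  (types 'bx = BX and 'bi = B[0,1]); tau l : B[0,1] \<Rightarrow> [0,1].\<close>
fun sem :: "(('x \<Rightarrow> real) \<Rightarrow> 'bx \<Rightarrow> 'bi) \<Rightarrow> ('l \<Rightarrow> 'bi \<Rightarrow> real) \<Rightarrow> ('x \<Rightarrow> 'bx)
              \<Rightarrow> 'l form \<Rightarrow> 'x \<Rightarrow> real" where
  "sem Bmap \<tau> x FTop = (\<lambda>a. 1)"
| "sem Bmap \<tau> x (FNeg \<phi>) = (\<lambda>a. 1 - sem Bmap \<tau> x \<phi> a)"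
| "sem Bmap \<tau> x (FMin \<phi> \<psi>) = (\<lambda>a. min (sem Bmap \<tau> x \<phi> a) (sem Bmap \<tau> x \<psi> a))"
| "sem Bmap \<tau> x (FMinus q \<phi>) = (\<lambda>a. max (sem Bmap \<tau> x \<phi> a - real_of_rat q) 0)"
| "sem Bmap \<tau> x (FHeart l \<phi>) = \<tau> l \<circ> Bmap (sem Bmap \<tau> x \<phi>) \<circ> x"

definition dS :: "('x \<Rightarrow> real) set \<Rightarrow> 'x \<Rightarrow> 'x \<Rightarrow> real" where
  "dS S a b = (SUP k\<in>S. \<bar>k a - k b\<bar>)"

definition approximating ::
  "(('x \<Rightarrow> real) \<Rightarrow> 'bx \<Rightarrow> 'bi) \<Rightarrow> ('l \<Rightarrow> 'bi \<Rightarrow> real) \<Rightarrow> 'l set \<Rightarrow> ('x \<Rightarrow> real) set \<Rightarrow> bool"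
where
  "approximating Bmap \<tau> L S \<longleftrightarrow>
     (\<forall>h :: 'x \<Rightarrow> real.
        (\<forall>a. h a \<in> {0..1}) \<longrightarrow> (\<forall>a b. \<bar>h a - h b\<bar> \<le> dS S a b) \<longrightarrow>
        (\<forall>l\<in>L. \<forall>z w.
           (SUP p\<in>S \<times> L. \<bar>\<tau> (snd p) (Bmap (fst p) z) - \<tau> (snd p) (Bmap (fst p) w)\<bar>)
             \<ge> \<bar>\<tau> l (Bmap h z) - \<tau> l (Bmap h w)\<bar>))"

end

theory Submission
  imports Defs
begin

definition ud :: "('a \<Rightarrow> real) \<Rightarrow> ('a \<Rightarrow> real) \<Rightarrow> real" where
  "ud f g = (SUP a. min 1 \<bar>f a - g a\<bar>)"

definition U01 :: "('a \<Rightarrow> real) set" where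
  "U01 = {f. \<forall>a. f a \<in> {0..1}}"

lemma ud_bdd: fixes f g :: "'a \<Rightarrow> real" shows "bdd_above (range (\<lambda>a. min 1 \<bar>f a - g a\<bar>))"
  by (rule bdd_aboveI[of _ 1]) (auto simp: min.cobounded1)

lemma ud_ge: fixes f g :: "'a \<Rightarrow> real" shows "min 1 \<bar>f a - g a\<bar> \<le> ud f g"
  unfolding ud_def by (rule cSUP_upper[OF _ ud_bdd]) auto

lemma ud_le: fixes f g :: "'a \<Rightarrow> real" assumes "\<And>a. \<bar>f a - g a\<bar> \<le> e" shows "ud f g \<le> e"
  unfolding ud_def
proof (rule cSUP_least)
  fix a show "min 1 \<bar>f a - g a\<bar> \<le> e" using assms[of a] by linarith
qed auto

lemma ud_lt: fixes f g :: "'a \<Rightarrow> real" assumes "ud f g < e" "e \<le> 1" shows "\<bar>f a - g a\<bar> < e"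
  using ud_ge[of f a g] assms by linarith

lemma ud_metric: "Metric_space UNIV ud"
proof
  fix f g :: "'a \<Rightarrow> real"
  show "0 \<le> ud f g" using ud_ge[of f undefined g] by linarith
  show "ud f g = ud g f" unfolding ud_def by (simp add: abs_minus_commute)
  show "(ud f g = 0) = (f = g)"
  proof
    assume "ud f g = 0"
    then have "\<bar>f a - g a\<bar> = 0" for a using ud_ge[of f a g] by (auto simp: min_def split: if_splits)
    then show "f = g" by auto
  next
    assume "f = g" then show "ud f g = 0" using ud_le[of f g 0] ud_ge[of f undefined g] by auto
  qed
next
  fix f g h :: "'a \<Rightarrow> real"
  show "ud f h \<le> ud f g + ud g h"
    unfolding ud_def[of f h]
  proof (rule cSUP_least)
    fix a
    have "min 1 \<bar>f a - h a\<bar> \<le> min 1 \<bar>f a - g a\<bar> + min 1 \<bar>g a - h a\<bar>" by linarith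
    then show "min 1 \<bar>f a - h a\<bar> \<le> ud f g + ud g h"
      using ud_ge[of f a g] ud_ge[of g a h] by linarith
  qed auto
qed

interpretation UM: Metric_space "UNIV :: ('a \<Rightarrow> real) set" ud
  by (rule ud_metric)

lemma finite_cells_funs:
  fixes K :: "'b set" and m :: nat
  assumes "finite K"
  shows "finite {\<phi> :: 'b \<Rightarrow> int. \<forall>f. (f \<in> K \<longrightarrow> \<phi> f \<in> {0..int m}) \<and> (f \<notin> K \<longrightarrow> \<phi> f = 0)}"
  by (rule finite_set_of_finite_funs) (use assms in auto)

lemma floor_cell:
  fixes u v :: real and m :: nat
  assumes "u \<in> {0..1}" "v \<in> {0..1}" "m > 0" "\<lfloor>u * m\<rfloor> = \<lfloor>v * m\<rfloor>"
  shows "\<bar>u - v\<bar> < 1 / m"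
proof -
  have "\<bar>u * m - v * m\<bar> < 1"
    using floor_correct[of "u * real m"] floor_correct[of "v * real m"] assms(4) by linarith
  moreover have "\<bar>u - v\<bar> * m = \<bar>u * m - v * m\<bar>" by (simp add: abs_mult left_diff_distrib[symmetric])
  ultimately have "\<bar>u - v\<bar> * m < 1" by simp
  then show ?thesis using assms(3) by (simp add: field_simps)
qed

lemma floor_range:
  fixes u :: real and m :: nat
  assumes "u \<in> {0..1}"
  shows "\<lfloor>u * m\<rfloor> \<in> {0..int m}"
proof -
  have "0 \<le> u * m" "u * m \<le> m" using assms mult_right_mono[of u 1 "real m"] by auto
  then show ?thesis by (auto simp: floor_le_iff le_floor_iff)
qed

lemma cells_of_tb:
  fixes G :: "('x \<Rightarrow> real) set"
  assumes tb: "UM.mtotally_bounded G" and GU: "G \<subseteq> U01" and e: "e > 0"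
  shows "\<exists>c :: 'x \<Rightarrow> ('x\<Rightarrow>real) \<Rightarrow> int. finite (range c) \<and>
           (\<forall>a b. c a = c b \<longrightarrow> (\<forall>g\<in>G. \<bar>g a - g b\<bar> \<le> e))"
proof -
  define e' where "e' = min (e/3) (1/2)"
  have e'pos: "e' > 0" "e' \<le> 1" "3 * e' \<le> e" using e by (auto simp: e'_def)
  obtain K where K: "finite K" "K \<subseteq> G" "G \<subseteq> (\<Union>k\<in>K. UM.mball k e')"
    using tb e'pos unfolding UM.mtotally_bounded_def by meson
  obtain m :: nat where m: "inverse (real (Suc m)) < e'" using reals_Archimedean e'pos by blast
  define M where "M = Suc m"
  have Mpos: "M > 0" and Me: "1 / real M < e'" using m by (auto simp: M_def field_simps)
  define c where "c = (\<lambda>a. \<lambda>f. if f \<in> K then \<lfloor>f a * M\<rfloor> else (0::int))"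
  have "range c \<subseteq> {\<phi> :: ('x\<Rightarrow>real) \<Rightarrow> int. \<forall>f. (f \<in> K \<longrightarrow> \<phi> f \<in> {0..int M}) \<and> (f \<notin> K \<longrightarrow> \<phi> f = 0)}"
    using K(2) GU floor_range by (auto simp: c_def U01_def)
  then have fin: "finite (range c)" by (rule finite_subset[OF _ finite_cells_funs[OF K(1)]])
  have "\<bar>g a - g b\<bar> \<le> e" if "c a = c b" "g \<in> G" for a b g
  proof -
    obtain f where f: "f \<in> K" "ud f g < e'" using K(3) \<open>g \<in> G\<close> by auto
    have fU: "f \<in> U01" using f K GU by auto
    have "\<lfloor>f a * M\<rfloor> = \<lfloor>f b * M\<rfloor>" using fun_cong[OF that(1), of f] f by (simp add: c_def)
    then have "\<bar>f a - f b\<bar> < 1 / M" using floor_cell fU Mpos by (auto simp: U01_def)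
    moreover have "\<bar>f y - g y\<bar> < e'" for y using ud_lt[OF f(2) e'pos(2)] .
    ultimately have "\<bar>f a - f b\<bar> < 1 / M" "\<bar>f a - g a\<bar> < e'" "\<bar>f b - g b\<bar> < e'" by auto
    then show ?thesis using Me e'pos by linarith
  qed
  then show ?thesis using fin by blast
qed

lemma tb_of_cells:
  fixes S :: "('x \<Rightarrow> real) set"
  assumes SU: "S \<subseteq> U01"
    and cells: "\<And>e. e > 0 \<Longrightarrow> \<exists>c :: 'x \<Rightarrow> 'c. finite (range c) \<and> (\<forall>a b. c a = c b \<longrightarrow> (\<forall>k\<in>S. \<bar>k a - k b\<bar> \<le> e))"
  shows "UM.mtotally_bounded S"
  unfolding UM.mtotally_bounded_def
proof (intro allI impI)
  fix \<epsilon> :: real assume \<epsilon>: "\<epsilon> > 0"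
  define e where "e = \<epsilon> / 4"
  have epos: "e > 0" using \<epsilon> by (simp add: e_def)
  obtain c :: "'x \<Rightarrow> 'c" where c: "finite (range c)" "\<And>a b k. c a = c b \<Longrightarrow> k \<in> S \<Longrightarrow> \<bar>k a - k b\<bar> \<le> e"
    using cells[OF epos] by blast
  define rep where "rep = (\<lambda>a. SOME a'. c a' = c a)"
  have crep: "c (rep a) = c a" for a unfolding rep_def by (rule someI_ex) blast
  define R where "R = (\<lambda>v. SOME a'. c a' = v) ` range c"
  have finR: "finite R" using c(1) by (simp add: R_def)
  have repR: "rep a \<in> R" for a unfolding R_def rep_def by auto
  obtain m :: nat where m: "inverse (real (Suc m)) < e" using reals_Archimedean epos by blast
  define M where "M = Suc m"
  have Mpos: "M > 0" and Me: "1 / real M < e" using m by (auto simp: M_def field_simps)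
  define C where "C = (\<lambda>k::'x\<Rightarrow>real. \<lambda>r. if r \<in> R then \<lfloor>k r * M\<rfloor> else (0::int))"
  have "C ` S \<subseteq> {\<phi> :: 'x \<Rightarrow> int. \<forall>f. (f \<in> R \<longrightarrow> \<phi> f \<in> {0..int M}) \<and> (f \<notin> R \<longrightarrow> \<phi> f = 0)}"
    using SU floor_range by (auto simp: C_def U01_def)
  then have finC: "finite (C ` S)" by (rule finite_subset[OF _ finite_cells_funs[OF finR]])
  define pick where "pick = (\<lambda>v. SOME k. k \<in> S \<and> C k = v)"
  have pick: "pick (C k) \<in> S \<and> C (pick (C k)) = C k" if "k \<in> S" for k
    using someI[of "\<lambda>k'. k' \<in> S \<and> C k' = C k" k] that unfolding pick_def by blast
  define K where "K = pick ` C ` S"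
  have "finite K" using finC by (simp add: K_def)
  moreover have "K \<subseteq> S" using pick by (auto simp: K_def)
  moreover have "S \<subseteq> (\<Union>f\<in>K. UM.mball f \<epsilon>)"
  proof
    fix k assume k: "k \<in> S"
    define f where "f = pick (C k)"
    have fS: "f \<in> S" and Cf: "C f = C k" using pick[OF k] by (auto simp: f_def)
    have "\<bar>f a - k a\<bar> \<le> 3 * e" for a
    proof -
      have r: "rep a \<in> R" by (rule repR)
      have "\<lfloor>f (rep a) * M\<rfloor> = \<lfloor>k (rep a) * M\<rfloor>" using fun_cong[OF Cf, of "rep a"] r by (simp add: C_def)
      moreover have "f (rep a) \<in> {0..1}" "k (rep a) \<in> {0..1}" using SU fS k by (auto simp: U01_def)
      ultimately have "\<bar>f (rep a) - k (rep a)\<bar> < 1 / M" using floor_cell Mpos by blast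
      moreover have "\<bar>f (rep a) - f a\<bar> \<le> e" "\<bar>k (rep a) - k a\<bar> \<le> e" using c(2)[OF crep] fS k by auto
      ultimately show ?thesis using Me by linarith
    qed
    then have "ud f k \<le> 3 * e" by (rule ud_le)
    then have "ud f k < \<epsilon>" using epos by (simp add: e_def)
    then show "k \<in> (\<Union>f\<in>K. UM.mball f \<epsilon>)" using k unfolding K_def f_def by auto
  qed
  ultimately show "\<exists>K. finite K \<and> K \<subseteq> S \<and> S \<subseteq> (\<Union>x\<in>K. UM.mball x \<epsilon>)" by blast
qed

lemma rat_approx:
  fixes t a b \<delta> :: real
  assumes "a \<in> \<rat>" "b \<in> \<rat>" "a \<le> t" "t \<le> b" "\<delta> > 0"
  shows "\<exists>r\<in>\<rat>. a \<le> r \<and> r \<le> b \<and> \<bar>r - t\<bar> \<le> \<delta>"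
proof -
  obtain r0 where r0: "r0 \<in> \<rat>" "t - \<delta> < r0" "r0 < t + \<delta>"
    using Rats_dense_in_real[of "t - \<delta>" "t + \<delta>"] assms by auto
  define r where "r = max a (min b r0)"
  have "r \<in> \<rat>" using r0 assms by (auto simp: r_def max_def min_def)
  moreover have "a \<le> r \<and> r \<le> b \<and> \<bar>r - t\<bar> \<le> \<delta>" using r0 assms by (auto simp: r_def max_def min_def)
  ultimately show ?thesis by blast
qed

locale pvctx =
  fixes Bmap :: "('x \<Rightarrow> real) \<Rightarrow> 'bx \<Rightarrow> 'bi"
    and \<tau> :: "'l \<Rightarrow> 'bi \<Rightarrow> real"
    and L :: "'l set"
    and x :: "'x \<Rightarrow> 'bx"
  assumes finL: "finite L"
    and tau_range: "\<forall>l\<in>L. \<forall>b. \<tau> l b \<in> {0..1}"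
    and tau_cont: "\<forall>(K :: nat \<Rightarrow> 'x \<Rightarrow> real) (f :: 'x \<Rightarrow> real).
        (\<forall>n a. K n a \<in> {0..1}) \<longrightarrow> (\<forall>a. f a \<in> {0..1}) \<longrightarrow>
        uniform_limit UNIV K f sequentially \<longrightarrow>
        (\<forall>l\<in>L. uniform_limit UNIV (\<lambda>n. \<tau> l \<circ> Bmap (K n)) (\<tau> l \<circ> Bmap f) sequentially)"
begin

abbreviation sm where "sm \<phi> \<equiv> sem Bmap \<tau> x \<phi>"

definition SS :: "nat \<Rightarrow> ('x \<Rightarrow> real) set" where
  "SS i = {sem Bmap \<tau> x \<phi> | \<phi>. wf_form L \<phi> \<and> depth \<phi> \<le> i}"

definition T :: "'l \<Rightarrow> ('x \<Rightarrow> real) \<Rightarrow> 'x \<Rightarrow> real" where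
  "T l k = \<tau> l \<circ> Bmap k \<circ> x"

definition GG :: "nat \<Rightarrow> ('x \<Rightarrow> real) set" where
  "GG i = {T l (sm \<psi>) | \<psi> l. wf_form L \<psi> \<and> depth \<psi> < i \<and> l \<in> L}"

lemma sem_range: "wf_form L \<phi> \<Longrightarrow> sm \<phi> a \<in> {0..1}"
proof (induction \<phi> arbitrary: a)
  case (FMinus q \<phi>)
  then have "sm \<phi> a \<in> {0..1}" "0 \<le> real_of_rat q" by auto
  then show ?case by (auto simp del: zero_le_of_rat_iff)
qed (use tau_range in \<open>auto simp: min_le_iff_disj\<close>)

lemma SS_I: "wf_form L \<phi> \<Longrightarrow> depth \<phi> \<le> i \<Longrightarrow> sm \<phi> \<in> SS i"
  unfolding SS_def by blast

lemma SS_E: assumes "k \<in> SS i" obtains \<phi> where "wf_form L \<phi>" "depth \<phi> \<le> i" "k = sm \<phi>"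
  using assms unfolding SS_def by blast

lemma SS_range: "k \<in> SS i \<Longrightarrow> k a \<in> {0..1}"
  by (metis SS_E sem_range)

lemma SS_U01: "SS i \<subseteq> U01"
  using SS_range by (auto simp: U01_def)

lemma GG_U01: "GG i \<subseteq> U01"
  using tau_range by (auto simp: U01_def GG_def T_def)

lemma diff_bound:
  assumes "wf_form L \<phi>" "depth \<phi> \<le> i" "0 \<le> e" "\<forall>g\<in>GG i. \<bar>g a - g b\<bar> \<le> e"
  shows "\<bar>sm \<phi> a - sm \<phi> b\<bar> \<le> e"
  using assms
proof (induction \<phi>)
  case FTop then show ?case by simp
next
  case (FNeg \<phi>) then show ?case by simp
next
  case (FMin \<phi>1 \<phi>2)
  then have "\<bar>sm \<phi>1 a - sm \<phi>1 b\<bar> \<le> e" "\<bar>sm \<phi>2 a - sm \<phi>2 b\<bar> \<le> e" by auto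
  then show ?case by (simp add: min_def abs_le_iff)
next
  case (FMinus q \<phi>)
  then have "\<bar>sm \<phi> a - sm \<phi> b\<bar> \<le> e" by auto
  then show ?case by (simp add: max_def abs_le_iff)
next
  case (FHeart l \<psi>)
  then have "depth \<psi> < i" by simp
  then have "T l (sm \<psi>) \<in> GG i" using FHeart unfolding GG_def by auto
  then have "\<bar>T l (sm \<psi>) a - T l (sm \<psi>) b\<bar> \<le> e" using FHeart.prems(4) by blast
  then show ?case by (simp add: T_def)
qed

lemma cells_SS:
  assumes "UM.mtotally_bounded (GG i)" "e > 0"
  shows "\<exists>c :: 'x \<Rightarrow> ('x\<Rightarrow>real) \<Rightarrow> int. finite (range c) \<and>
           (\<forall>a b. c a = c b \<longrightarrow> (\<forall>k\<in>SS i. \<bar>k a - k b\<bar> \<le> e))"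
proof -
  obtain c :: "'x \<Rightarrow> ('x\<Rightarrow>real) \<Rightarrow> int" where c: "finite (range c)"
    "\<forall>a b. c a = c b \<longrightarrow> (\<forall>g\<in>GG i. \<bar>g a - g b\<bar> \<le> e)"
    using cells_of_tb[OF assms(1) GG_U01 assms(2)] by blast
  have "\<forall>k\<in>SS i. \<bar>k a - k b\<bar> \<le> e" if "c a = c b" for a b
    using diff_bound c(2) that assms(2) by (auto elim!: SS_E)
  then show ?thesis using c(1) by blast
qed

lemma tb_image:
  assumes tb: "UM.mtotally_bounded S" and SU: "S \<subseteq> U01" and l: "l \<in> L"
  shows "UM.mtotally_bounded (T l ` S)"
  unfolding UM.mtotally_bounded_sequentially
proof (intro conjI allI impI)
  fix \<sigma> :: "nat \<Rightarrow> 'x \<Rightarrow> real"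
  assume "range \<sigma> \<subseteq> T l ` S"
  then have "\<forall>n. \<exists>k. k \<in> S \<and> \<sigma> n = T l k" by blast
  then obtain \<sigma>' where \<sigma>': "\<And>n. \<sigma>' n \<in> S" "\<And>n. \<sigma> n = T l (\<sigma>' n)" by metis
  have "range \<sigma>' \<subseteq> S" using \<sigma>' by auto
  then obtain r where r: "strict_mono r" "UM.MCauchy (\<sigma>' \<circ> r)"
    using tb unfolding UM.mtotally_bounded_sequentially by blast
  define \<kappa> where "\<kappa> = \<sigma>' \<circ> r"
  have \<kappa>S: "\<kappa> n \<in> S" for n using \<sigma>' by (simp add: \<kappa>_def)
  have "\<forall>e>0. \<exists>N. \<forall>m n y. N \<le> m \<and> N \<le> n \<and> True \<longrightarrow> dist (\<kappa> m y) (\<kappa> n y) < e"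
  proof (intro allI impI)
    fix e :: real assume e: "e > 0"
    obtain N where N: "\<And>m n. N \<le> m \<Longrightarrow> N \<le> n \<Longrightarrow> ud (\<kappa> m) (\<kappa> n) < min e 1"
      using r(2) e unfolding UM.MCauchy_def \<kappa>_def by (meson min_less_iff_conj zero_less_one)
    show "\<exists>N. \<forall>m n y. N \<le> m \<and> N \<le> n \<and> True \<longrightarrow> dist (\<kappa> m y) (\<kappa> n y) < e"
    proof (intro exI allI impI)
      fix m n y assume "N \<le> m \<and> N \<le> n \<and> True"
      then have "\<bar>\<kappa> m y - \<kappa> n y\<bar> < min e 1" using N ud_lt by (meson min.cobounded2)
      then show "dist (\<kappa> m y) (\<kappa> n y) < e" by (simp add: dist_real_def)
    qed
  qed
  then obtain f where f: "\<forall>e>0. \<exists>N. \<forall>n y. N \<le> n \<and> True \<longrightarrow> dist (\<kappa> n y) (f y) < e"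
    using uniformly_convergent_eq_cauchy[of "\<lambda>_. True" \<kappa>] by blast
  have ul: "uniform_limit UNIV \<kappa> f sequentially"
    unfolding uniform_limit_sequentially_iff using f by blast
  have f01: "f y \<in> {0..1}" for y
  proof -
    have lim: "(\<lambda>n. \<kappa> n y) \<longlonglongrightarrow> f y" using tendsto_uniform_limitI[OF ul] by simp
    have "\<kappa> n y \<in> {0..1}" for n using \<kappa>S SU by (auto simp: U01_def)
    then have "0 \<le> f y" "f y \<le> 1"
      using LIMSEQ_le_const[OF lim, of 0] LIMSEQ_le_const2[OF lim, of 1] by auto
    then show ?thesis by simp
  qed
  have k01: "\<forall>n a. \<kappa> n a \<in> {0..1}" using \<kappa>S SU by (auto simp: U01_def)
  have ul2: "uniform_limit UNIV (\<lambda>n. \<tau> l \<circ> Bmap (\<kappa> n)) (\<tau> l \<circ> Bmap f) sequentially"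
    using tau_cont k01 f01 ul l by blast
  have "UM.MCauchy (\<sigma> \<circ> r)"
    unfolding UM.MCauchy_def
  proof (intro conjI allI impI)
    show "range (\<sigma> \<circ> r) \<subseteq> UNIV" by simp
    fix \<epsilon> :: real assume \<epsilon>: "\<epsilon> > 0"
    then obtain N where N: "\<And>n b. n \<ge> N \<Longrightarrow> dist ((\<tau> l \<circ> Bmap (\<kappa> n)) b) ((\<tau> l \<circ> Bmap f) b) < \<epsilon>/3"
      using ul2 unfolding uniform_limit_sequentially_iff by (meson UNIV_I divide_pos_pos zero_less_numeral)
    show "\<exists>N. \<forall>n n'. N \<le> n \<longrightarrow> N \<le> n' \<longrightarrow> ud ((\<sigma> \<circ> r) n) ((\<sigma> \<circ> r) n') < \<epsilon>"
    proof (intro exI allI impI)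
      fix n n' assume nn: "N \<le> n" "N \<le> n'"
      have "\<bar>(\<sigma> \<circ> r) n a - (\<sigma> \<circ> r) n' a\<bar> \<le> 2 * \<epsilon> / 3" for a
      proof -
        have "(\<sigma> \<circ> r) n a = \<tau> l (Bmap (\<kappa> n) (x a))" "(\<sigma> \<circ> r) n' a = \<tau> l (Bmap (\<kappa> n') (x a))"
          using \<sigma>' by (auto simp: T_def \<kappa>_def)
        moreover have "\<bar>\<tau> l (Bmap (\<kappa> n) (x a)) - \<tau> l (Bmap f (x a))\<bar> < \<epsilon>/3"
          "\<bar>\<tau> l (Bmap (\<kappa> n') (x a)) - \<tau> l (Bmap f (x a))\<bar> < \<epsilon>/3"
          using N[OF nn(1), of "x a"] N[OF nn(2), of "x a"] by (auto simp: dist_real_def)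
        ultimately show ?thesis by linarith
      qed
      then have "ud ((\<sigma> \<circ> r) n) ((\<sigma> \<circ> r) n') \<le> 2 * \<epsilon> / 3" by (rule ud_le)
      then show "ud ((\<sigma> \<circ> r) n) ((\<sigma> \<circ> r) n') < \<epsilon>" using \<epsilon> by linarith
    qed
  qed
  then show "\<exists>r. strict_mono r \<and> UM.MCauchy (\<sigma> \<circ> r)" using r(1) by blast
qed simp

lemma GG_Suc: "GG (Suc j) = (\<Union>l\<in>L. T l ` SS j)"
  unfolding GG_def SS_def by (auto simp: less_Suc_eq_le)

lemma GG_tb: "UM.mtotally_bounded (GG i)"
proof (induction i)
  case 0
  have "GG 0 = {}" by (simp add: GG_def)
  then show ?case by simp
next
  case (Suc j)
  have "UM.mtotally_bounded (SS j)"
    by (rule tb_of_cells[OF SS_U01]) (rule cells_SS[OF Suc])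
  then have "\<And>l. l \<in> L \<Longrightarrow> UM.mtotally_bounded (T l ` SS j)"
    using tb_image SS_U01 by blast
  then show ?case unfolding GG_Suc
    by (intro UM.mtotally_bounded_Union) (use finL in auto)
qed

end

context pvctx begin

lemma SS_top: "(\<lambda>a. 1) \<in> SS i"
  using SS_I[of FTop i] by simp

lemma SS_neg: assumes "k \<in> SS i" shows "(\<lambda>a. 1 - k a) \<in> SS i"
proof -
  obtain \<phi> where "wf_form L \<phi>" "depth \<phi> \<le> i" "k = sm \<phi>" using assms by (rule SS_E)
  then show ?thesis using SS_I[of "FNeg \<phi>" i] by simp
qed

lemma SS_min: assumes "k \<in> SS i" "k' \<in> SS i" shows "(\<lambda>a. min (k a) (k' a)) \<in> SS i"
proof -
  obtain \<phi> where "wf_form L \<phi>" "depth \<phi> \<le> i" "k = sm \<phi>" using assms(1) by (rule SS_E)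
  moreover obtain \<psi> where "wf_form L \<psi>" "depth \<psi> \<le> i" "k' = sm \<psi>" using assms(2) by (rule SS_E)
  ultimately show ?thesis using SS_I[of "FMin \<phi> \<psi>" i] by simp
qed

lemma SS_max: assumes "k \<in> SS i" "k' \<in> SS i" shows "(\<lambda>a. max (k a) (k' a)) \<in> SS i"
proof -
  have "(\<lambda>a. 1 - min (1 - k a) (1 - k' a)) \<in> SS i"
    using SS_neg SS_min assms by blast
  moreover have "(\<lambda>a. 1 - min (1 - k a) (1 - k' a)) = (\<lambda>a. max (k a) (k' a))"
    by (auto simp: fun_eq_iff min_def max_def)
  ultimately show ?thesis by simp
qed

lemma SS_const: assumes "r \<in> \<rat>" "0 \<le> r" "r \<le> 1" shows "(\<lambda>a. r) \<in> SS i"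
proof -
  obtain q where q: "r = of_rat q" using assms(1) by (rule Rats_cases)
  have "0 \<le> q" "q \<le> 1" using assms q by auto
  then have "sm (FMinus (1 - q) FTop) \<in> SS i" by (intro SS_I) auto
  moreover have "sm (FMinus (1 - q) FTop) = (\<lambda>a. r)" using q \<open>q \<le> 1\<close> \<open>0 \<le> q\<close>
    by (auto simp: fun_eq_iff of_rat_diff)
  ultimately show ?thesis by simp
qed

lemma SS_clamp: assumes "k \<in> SS i" "s \<in> \<rat>" "-1 \<le> s" "s \<le> 1"
  shows "(\<lambda>a. max 0 (min 1 (k a - s))) \<in> SS i"
proof -
  obtain \<phi> where \<phi>: "wf_form L \<phi>" "depth \<phi> \<le> i" "k = sm \<phi>" using assms(1) by (rule SS_E)
  obtain q where q: "s = of_rat q" using assms(2) by (rule Rats_cases)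
  have k01: "k a \<in> {0..1}" for a using SS_range[OF assms(1)] .
  show ?thesis
  proof (cases "0 \<le> q")
    case True
    have "real_of_rat q \<le> real_of_rat 1" using assms q by simp
    then have "q \<le> 1" using of_rat_less_eq by blast
    then have "sm (FMinus q \<phi>) \<in> SS i" using True \<phi> by (intro SS_I) auto
    moreover have "sm (FMinus q \<phi>) = (\<lambda>a. max 0 (min 1 (k a - s)))"
    proof
      fix a have "0 \<le> s" using True q by simp
      then have "k a - s \<le> 1" using k01[of a] by auto
      then show "sm (FMinus q \<phi>) a = max 0 (min 1 (k a - s))" using \<phi> q by (simp add: max_def min_def)
    qed
    ultimately show ?thesis by simp
  next
    case False
    have "real_of_rat (-1) \<le> real_of_rat q" using assms q by simp
    then have "-1 \<le> q" using of_rat_less_eq by blast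
    then have "0 \<le> - q" "- q \<le> 1" using False by auto
    then have "sm (FNeg (FMinus (- q) (FNeg \<phi>))) \<in> SS i" using \<phi> by (intro SS_I) auto
    moreover have "sm (FNeg (FMinus (- q) (FNeg \<phi>))) = (\<lambda>a. max 0 (min 1 (k a - s)))"
    proof
      fix a have "s < 0" using False q by simp
      then have "0 \<le> k a - s" using k01[of a] by auto
      then show "sm (FNeg (FMinus (- q) (FNeg \<phi>))) a = max 0 (min 1 (k a - s))"
        using \<phi> q by (simp add: max_def min_def of_rat_minus)
    qed
    ultimately show ?thesis by simp
  qed
qed

lemma SS_Min:
  assumes "finite A" "A \<noteq> {}" "\<forall>q\<in>A. g q \<in> SS i"
  shows "\<exists>f\<in>SS i. \<forall>y. f y = Min ((\<lambda>q. g q y) ` A)"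
  using assms
proof (induction A rule: finite_ne_induct)
  case (singleton q) then show ?case by auto
next
  case (insert q F)
  then obtain f where f: "f \<in> SS i" "\<forall>y. f y = Min ((\<lambda>q. g q y) ` F)" by auto
  have gq: "g q \<in> SS i" using insert by simp
  have "(\<lambda>y. min (g q y) (f y)) \<in> SS i" by (rule SS_min[OF gq f(1)])
  moreover have "\<forall>y. (\<lambda>y. min (g q y) (f y)) y = Min ((\<lambda>q. g q y) ` insert q F)"
    using f insert by (simp add: Min_insert)
  ultimately show ?case by (intro bexI[of _ "\<lambda>y. min (g q y) (f y)"]) auto
qed

lemma SS_Max:
  assumes "finite A" "A \<noteq> {}" "\<forall>q\<in>A. g q \<in> SS i"
  shows "\<exists>f\<in>SS i. \<forall>y. f y = Max ((\<lambda>q. g q y) ` A)"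
  using assms
proof (induction A rule: finite_ne_induct)
  case (singleton q) then show ?case by auto
next
  case (insert q F)
  then obtain f where f: "f \<in> SS i" "\<forall>y. f y = Max ((\<lambda>q. g q y) ` F)" by auto
  have gq: "g q \<in> SS i" using insert by simp
  have "(\<lambda>y. max (g q y) (f y)) \<in> SS i" by (rule SS_max[OF gq f(1)])
  moreover have "\<forall>y. (\<lambda>y. max (g q y) (f y)) y = Max ((\<lambda>q. g q y) ` insert q F)"
    using f insert by (simp add: Max_insert)
  ultimately show ?case by (intro bexI[of _ "\<lambda>y. max (g q y) (f y)"]) auto
qed

lemma SS_bdd: "bdd_above ((\<lambda>k. \<bar>k a - k b\<bar>) ` SS i)"
proof (rule bdd_aboveI[of _ 1])
  fix v assume "v \<in> (\<lambda>k. \<bar>k a - k b\<bar>) ` SS i"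
  then obtain k where "k \<in> SS i" "v = \<bar>k a - k b\<bar>" by auto
  then show "v \<le> 1" using SS_range[of k i a] SS_range[of k i b] by auto
qed

lemma dS_ge: "k \<in> SS i \<Longrightarrow> \<bar>k a - k b\<bar> \<le> dS (SS i) a b"
  unfolding dS_def by (rule cSUP_upper[OF _ SS_bdd])

lemma dS_le: "(\<And>k. k \<in> SS i \<Longrightarrow> \<bar>k a - k b\<bar> \<le> e) \<Longrightarrow> dS (SS i) a b \<le> e"
  unfolding dS_def by (rule cSUP_least) (use SS_top in auto)

lemma dS_gt: "D < dS (SS i) a b \<Longrightarrow> \<exists>k\<in>SS i. D < \<bar>k a - k b\<bar>"
  unfolding dS_def using less_cSUP_iff[OF _ SS_bdd] SS_top by blast

lemma clamp_near: assumes "t \<in> {0..1::real}" shows "\<bar>max 0 (min 1 u) - t\<bar> \<le> \<bar>u - t\<bar>"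
  using assms by (auto simp: max_def min_def abs_le_iff)

lemma clamp_le: assumes "0 \<le> t" "u \<le> (t::real)" shows "max 0 (min 1 u) \<le> t"
  using assms by (auto simp: max_def min_def)

lemma max_near1: fixes u r a b d :: real
  assumes "\<bar>u - a\<bar> \<le> d/4" "\<bar>r - b\<bar> \<le> d/4" "b \<le> a" shows "\<bar>max u r - a\<bar> \<le> d/4"
  using assms unfolding max_def abs_le_iff by auto

lemma max_near2: fixes u r b d :: real
  assumes "u \<le> b + d/2" "0 \<le> u" "\<bar>r - b\<bar> \<le> d/4" shows "\<bar>max u r - b\<bar> \<le> d/2"
  using assms unfolding max_def abs_le_iff by auto

lemma interp2:
  assumes h01: "\<forall>a. h a \<in> {0..1}" and hne: "\<forall>a b. \<bar>h a - h b\<bar> \<le> dS (SS i) a b"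
    and \<delta>: "\<delta> > 0" and pq: "h q \<le> h p"
  shows "\<exists>g\<in>SS i. \<bar>g p - h p\<bar> \<le> \<delta> \<and> \<bar>g q - h q\<bar> \<le> \<delta>"
proof (cases "h p - h q \<le> \<delta>/2")
  case True
  obtain r where r: "r \<in> \<rat>" "0 \<le> r" "r \<le> 1" "\<bar>r - h p\<bar> \<le> \<delta>/2"
    using rat_approx[of 0 1 "h p" "\<delta>/2"] h01 \<delta> by auto
  then have "(\<lambda>a. r) \<in> SS i" by (intro SS_const)
  moreover have "\<bar>r - h p\<bar> \<le> \<delta> \<and> \<bar>r - h q\<bar> \<le> \<delta>" using r True pq by linarith
  ultimately show ?thesis by (intro bexI[of _ "\<lambda>a. r"]) auto
next
  case False
  have "h p - h q - \<delta>/4 < dS (SS i) p q" using hne[rule_format, of p q] abs_ge_self[of "h p - h q"] False \<delta> by linarith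
  then obtain k where k: "k \<in> SS i" "h p - h q - \<delta>/4 < \<bar>k p - k q\<bar>" using dS_gt by blast
  obtain k' where k': "k' \<in> SS i" "h p - h q - \<delta>/4 < k' p - k' q"
  proof (cases "k q \<le> k p")
    case True then show ?thesis using that k by auto
  next
    case False then show ?thesis using that[of "\<lambda>a. 1 - k a"] k SS_neg by auto
  qed
  have "k' p \<in> {0..1}" using SS_range[OF k'(1)] .
  then obtain s where s: "s \<in> \<rat>" "-1 \<le> s" "s \<le> 1" "\<bar>s - (k' p - h p)\<bar> \<le> \<delta>/4"
    using rat_approx[of "-1" 1 "k' p - h p" "\<delta>/4"] h01[rule_format, of p] \<delta> by auto
  obtain r where r: "r \<in> \<rat>" "0 \<le> r" "r \<le> 1" "\<bar>r - h q\<bar> \<le> \<delta>/4"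
    using rat_approx[of 0 1 "h q" "\<delta>/4"] h01 \<delta> by auto
  define g where "g = (\<lambda>a. max (max 0 (min 1 (k' a - s))) r)"
  have gS: "g \<in> SS i" unfolding g_def
    by (intro SS_max SS_clamp SS_const k' s r)
  have hp: "h p \<in> {0..1}" and hq: "h q \<in> {0..1}" using h01 by auto
  have A: "\<bar>max 0 (min 1 (k' p - s)) - h p\<bar> \<le> \<delta>/4"
    using clamp_near[OF hp, of "k' p - s"] s(4) by (smt (verit))
  have B0: "k' q - s \<le> h q + \<delta>/2" using s(4) k'(2) abs_le_iff[of "s - (k' p - h p)" "\<delta>/4"] by linarith
  have B: "max 0 (min 1 (k' q - s)) \<le> h q + \<delta>/2"
    using clamp_le[of "h q + \<delta>/2" "k' q - s"] hq \<delta> B0 by simp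
  have C: "0 \<le> max 0 (min 1 (k' q - s))" by simp
  have "\<bar>g p - h p\<bar> \<le> \<delta>" unfolding g_def using max_near1[OF A r(4) pq] \<delta> by linarith
  moreover have "\<bar>g q - h q\<bar> \<le> \<delta>" unfolding g_def using max_near2[OF B C r(4)] \<delta> by linarith
  ultimately show ?thesis using gS by blast
qed

lemma interp:
  assumes h01: "\<forall>a. h a \<in> {0..1}" and hne: "\<forall>a b. \<bar>h a - h b\<bar> \<le> dS (SS i) a b"
    and \<delta>: "\<delta> > 0"
  shows "\<exists>g\<in>SS i. \<bar>g p - h p\<bar> \<le> \<delta> \<and> \<bar>g q - h q\<bar> \<le> \<delta>"
proof (cases "h q \<le> h p")
  case True then show ?thesis using interp2[OF h01 hne \<delta>] by blast
next
  case False then show ?thesis using interp2[OF h01 hne \<delta>, of p q] by auto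
qed

end

context pvctx begin

lemma approx:
  assumes h01: "\<forall>a. h a \<in> {0..1}" and hne: "\<forall>a b. \<bar>h a - h b\<bar> \<le> dS (SS i) a b"
    and \<epsilon>: "\<epsilon> > 0"
  shows "\<exists>k\<in>SS i. \<forall>a. \<bar>k a - h a\<bar> \<le> \<epsilon>"
proof -
  define e where "e = \<epsilon> / 3"
  have e: "e > 0" using \<epsilon> by (simp add: e_def)
  obtain c :: "'x \<Rightarrow> ('x\<Rightarrow>real) \<Rightarrow> int" where c: "finite (range c)"
    "\<And>a b k. c a = c b \<Longrightarrow> k \<in> SS i \<Longrightarrow> \<bar>k a - k b\<bar> \<le> e"
    using cells_SS[OF GG_tb e] by blast
  define rep where "rep = (\<lambda>a. SOME a'. c a' = c a)"
  have crep: "c (rep a) = c a" for a unfolding rep_def by (rule someI_ex) blast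
  define R where "R = (\<lambda>v. SOME a'. c a' = v) ` range c"
  have finR: "finite R" using c(1) by (simp add: R_def)
  have repR: "rep a \<in> R" for a unfolding R_def rep_def by auto
  have Rne: "R \<noteq> {}" using repR by blast
  have kclose: "\<bar>k y - k (rep y)\<bar> \<le> e" if "k \<in> SS i" for k y
    using c(2)[OF crep[symmetric] that] .
  have hclose: "\<bar>h y - h (rep y)\<bar> \<le> e" for y
  proof -
    have "dS (SS i) y (rep y) \<le> e" by (rule dS_le) (rule kclose)
    then show ?thesis using hne[rule_format, of y "rep y"] by linarith
  qed
  have "\<forall>pq. \<exists>g. g \<in> SS i \<and> \<bar>g (fst pq) - h (fst pq)\<bar> \<le> e \<and> \<bar>g (snd pq) - h (snd pq)\<bar> \<le> e"
  proof
    fix pq :: "'x \<times> 'x"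
    show "\<exists>g. g \<in> SS i \<and> \<bar>g (fst pq) - h (fst pq)\<bar> \<le> e \<and> \<bar>g (snd pq) - h (snd pq)\<bar> \<le> e"
      using interp[OF h01 hne e, of "fst pq" "snd pq"] by blast
  qed
  from choice[OF this] obtain gg where ggall: "\<forall>pq. gg pq \<in> SS i \<and> \<bar>gg pq (fst pq) - h (fst pq)\<bar> \<le> e \<and> \<bar>gg pq (snd pq) - h (snd pq)\<bar> \<le> e"
    by blast
  have gg: "\<And>pq. gg pq \<in> SS i"
    "\<And>pq. \<bar>gg pq (fst pq) - h (fst pq)\<bar> \<le> e" "\<And>pq. \<bar>gg pq (snd pq) - h (snd pq)\<bar> \<le> e"
    using ggall by auto
  have "\<forall>p. \<exists>u. u \<in> SS i \<and> (\<forall>y. u y = Min ((\<lambda>q. gg (p,q) y) ` R))"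
  proof
    fix p
    have "\<forall>q\<in>R. gg (p,q) \<in> SS i" using gg(1) by blast
    from SS_Min[OF finR Rne this] show "\<exists>u. u \<in> SS i \<and> (\<forall>y. u y = Min ((\<lambda>q. gg (p,q) y) ` R))"
      by blast
  qed
  from choice[OF this] obtain U where Uall: "\<forall>p. U p \<in> SS i \<and> (\<forall>y. U p y = Min ((\<lambda>q. gg (p,q) y) ` R))"
    by blast
  have U: "\<And>p. U p \<in> SS i" "\<And>p y. U p y = Min ((\<lambda>q. gg (p,q) y) ` R)"
    using Uall by auto
  obtain f where f: "f \<in> SS i" "\<And>y. f y = Max ((\<lambda>p. U p y) ` R)"
  proof -
    have "\<forall>p\<in>R. U p \<in> SS i" using U(1) by blast
    from SS_Max[OF finR Rne this] show ?thesis using that by blast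
  qed
  have "\<bar>f y - h y\<bar> \<le> \<epsilon>" for y
  proof -
    have up: "U p y \<le> h y + 3 * e" if "p \<in> R" for p
    proof -
      have "U p y \<le> gg (p, rep y) y" unfolding U(2) using finR repR by (intro Min_le) auto
      also have "\<dots> \<le> gg (p, rep y) (rep y) + e" using kclose[OF gg(1), of "(p, rep y)" y] by linarith
      also have "\<dots> \<le> h (rep y) + 2 * e" using gg(3)[of "(p, rep y)"] by simp
      also have "\<dots> \<le> h y + 3 * e" using hclose[of y] by linarith
      finally show ?thesis .
    qed
    have "f y \<le> h y + 3 * e" unfolding f(2) using finR Rne up by (subst Max_le_iff) auto
    moreover have "h y - 3 * e \<le> f y"
    proof -
      have "h y - 3 * e \<le> h (rep y) - 2 * e" using hclose[of y] by linarith
      also have "\<dots> \<le> U (rep y) (rep y) - e" unfolding U(2)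
      proof -
        have "h (rep y) - e \<le> gg (rep y, q) (rep y)" for q
          using gg(2)[of "(rep y, q)"] by (auto simp: abs_le_iff)
        then have "\<forall>q\<in>R. h (rep y) - e \<le> gg (rep y, q) (rep y)" by blast
        then have "h (rep y) - e \<le> Min ((\<lambda>q. gg (rep y, q) (rep y)) ` R)"
          using finR Rne by (subst Min_ge_iff) auto
        then show "h (rep y) - 2 * e \<le> Min ((\<lambda>q. gg (rep y, q) (rep y)) ` R) - e" by linarith
      qed
      also have "\<dots> \<le> U (rep y) y" using kclose[OF U(1), of "rep y" y] by linarith
      also have "\<dots> \<le> f y" unfolding f(2) using finR repR by (intro Max_ge) auto
      finally show ?thesis .
    qed
    ultimately show ?thesis unfolding e_def by linarith
  qed
  then show ?thesis using f(1) by blast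
qed

lemma main: "approximating Bmap \<tau> L (SS i)"
  unfolding approximating_def
proof (intro allI impI ballI)
  fix h :: "'x \<Rightarrow> real" and l z w
  assume h01: "\<forall>a. h a \<in> {0..1}" and hne: "\<forall>a b. \<bar>h a - h b\<bar> \<le> dS (SS i) a b" and l: "l \<in> L"
  have "\<forall>n. \<exists>k. k \<in> SS i \<and> (\<forall>a. \<bar>k a - h a\<bar> \<le> 1 / (Suc n))"
  proof
    fix n :: nat
    have "(0::real) < 1 / real (Suc n)" by simp
    from approx[OF h01 hne this] show "\<exists>k. k \<in> SS i \<and> (\<forall>a. \<bar>k a - h a\<bar> \<le> 1 / (Suc n))" by blast
  qed
  from choice[OF this] obtain K where Kall: "\<forall>n. K n \<in> SS i \<and> (\<forall>a. \<bar>K n a - h a\<bar> \<le> 1 / (Suc n))"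
    by blast
  have K: "\<And>n. K n \<in> SS i" "\<And>n a. \<bar>K n a - h a\<bar> \<le> 1 / (Suc n)" using Kall by auto
  have ul: "uniform_limit UNIV K h sequentially"
    unfolding uniform_limit_sequentially_iff
  proof (intro allI impI)
    fix e :: real assume e: "e > 0"
    obtain N :: nat where N: "inverse (real (Suc N)) < e" using reals_Archimedean e by blast
    show "\<exists>N. \<forall>n\<ge>N. \<forall>x\<in>UNIV. dist (K n x) (h x) < e"
    proof (intro exI allI impI ballI)
      fix n a assume "N \<le> n"
      then have "1 / real (Suc n) \<le> 1 / real (Suc N)" by (simp add: frac_le)
      then show "dist (K n a) (h a) < e" using K(2)[of n a] N by (simp add: dist_real_def inverse_eq_divide)
    qed
  qed
  have K01: "\<forall>n a. K n a \<in> {0..1}" using K(1) SS_range by blast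
  have ul2: "uniform_limit UNIV (\<lambda>n. \<tau> l \<circ> Bmap (K n)) (\<tau> l \<circ> Bmap h) sequentially"
    using tau_cont[rule_format, of K h, OF _ _ ul l] K01 h01 by blast
  have lz: "(\<lambda>n. \<tau> l (Bmap (K n) z)) \<longlonglongrightarrow> \<tau> l (Bmap h z)"
    using tendsto_uniform_limitI[OF ul2, of z] by simp
  have lw: "(\<lambda>n. \<tau> l (Bmap (K n) w)) \<longlonglongrightarrow> \<tau> l (Bmap h w)"
    using tendsto_uniform_limitI[OF ul2, of w] by simp
  have lim: "(\<lambda>n. \<bar>\<tau> l (Bmap (K n) z) - \<tau> l (Bmap (K n) w)\<bar>) \<longlonglongrightarrow> \<bar>\<tau> l (Bmap h z) - \<tau> l (Bmap h w)\<bar>"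
    by (intro tendsto_rabs tendsto_diff lz lw)
  let ?F = "\<lambda>p. \<bar>\<tau> (snd p) (Bmap (fst p) z) - \<tau> (snd p) (Bmap (fst p) w)\<bar>"
  have bdd: "bdd_above (?F ` (SS i \<times> L))"
  proof (rule bdd_aboveI[of _ 1])
    fix v assume "v \<in> ?F ` (SS i \<times> L)"
    then obtain k l' where "l' \<in> L" "v = \<bar>\<tau> l' (Bmap k z) - \<tau> l' (Bmap k w)\<bar>" by auto
    moreover have "\<tau> l' (Bmap k z) \<in> {0..1}" "\<tau> l' (Bmap k w) \<in> {0..1}" using tau_range \<open>l' \<in> L\<close> by auto
    ultimately show "v \<le> 1" by auto
  qed
  have "\<bar>\<tau> l (Bmap (K n) z) - \<tau> l (Bmap (K n) w)\<bar> \<le> (SUP p\<in>SS i \<times> L. ?F p)" for n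
    using cSUP_upper[OF _ bdd, of "(K n, l)"] K(1) l by auto
  then show "(SUP p\<in>SS i \<times> L. ?F p) \<ge> \<bar>\<tau> l (Bmap h z) - \<tau> l (Bmap h w)\<bar>"
    using LIMSEQ_le_const2[OF lim] by blast
qed

end

theorem propositionV8:
  fixes Bmap :: "('x \<Rightarrow> real) \<Rightarrow> 'bx \<Rightarrow> 'bi"
    and \<tau> :: "'l \<Rightarrow> 'bi \<Rightarrow> real"
    and L :: "'l set"
    and x :: "'x \<Rightarrow> 'bx"
    and i :: nat
  assumes finL: "finite L"
    and tau_range: "\<forall>l\<in>L. \<forall>b. \<tau> l b \<in> {0..1}"
    and tau_cont: "\<forall>(K :: nat \<Rightarrow> 'x \<Rightarrow> real) (f :: 'x \<Rightarrow> real).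
        (\<forall>n a. K n a \<in> {0..1}) \<longrightarrow> (\<forall>a. f a \<in> {0..1}) \<longrightarrow>
        uniform_limit UNIV K f sequentially \<longrightarrow>
        (\<forall>l\<in>L. uniform_limit UNIV (\<lambda>n. \<tau> l \<circ> Bmap (K n)) (\<tau> l \<circ> Bmap f) sequentially)"
  shows "approximating Bmap \<tau> L
           {sem Bmap \<tau> x \<phi> | \<phi>. wf_form L \<phi> \<and> depth \<phi> \<le> i}"
proof -
  interpret pvctx Bmap \<tau> L x using finL tau_range tau_cont by unfold_locales
  show ?thesis using main[of i] unfolding SS_def .
qed

end
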